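(* Every series $P\in\mathcal R^+$ is congruent modulo $\mathfrak I_0$ to the characteristic series $S_X$ of some $X\in\mathbb W$. Consequently every $S\in\mathcal R$ can be written as $S=S_X-S_Y+S_0$ for suitable $X,Y\in\mathbb W$ and $S_0\in\mathfrak I_0$.
   Context: Let $\mathbb N=\{0,1,2,\dots\}$. $\mathbb{W}$ is the family of finitary point sets: sets $A\subseteq\bigcup_{k\ge1}\mathbb N^k$ of finite tuples of natural numbers such that for every $n\in\mathbb N$ there is $h$ with $A\cap\{0,\dots,n\}^k=\emptyset$ for all $k>h$. Let $t_0,t_1,\dots$ be countably many indeterminates; let $\mathbf A$ be the set of eventually zero sequences $\mathbf a=(a_0,a_1,\dots)$ of non-negative integers, and $t^{\mathbf a}=\prod_i t_i^{a_i}$. Formal series are $S=\sum_{\mathbf a\in\mathbf A}n_{\mathbf a}t^{\mathbf a}$ with $n_{\mathbf a}\in\mathbb Z$. $\mathcal R$ is the ring of those formal series $S$ for which there exist $d_n\in\mathbb N$ $(n\in\mathbb N)$ with $n_{\mathbf a}=0$ whenever $a_n>d_n$ for some $n$ (bounded degree $d_n$ in each variable $t_n$), and some $b\in\mathbb N$ with $|n_{\mathbf a}|\le b\,(\sum_i a_i)!/\prod_i a_i!$ for all $\mathbf a$. $\mathcal R^+$ is the set of nonzero series of $\mathcal R$ all of whose coefficients are non-negative (positive series). $\mathfrak I_0$ is the ideal of $\mathcal R$ generated by $\{t_n-1:n\in\mathbb N\}$. For a tuple $x=(x_1,\dots,x_d)$ let $t_x=t^{\mathbf a}$ where $a_i=|\{j:x_j=i\}|$.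 The characteristic series of $X\in\mathbb W$ is $S_X=\sum_{x\in X}t_x$ (the coefficient of $t^{\mathbf a}$ is the number of $x\in X$ with $t_x=t^{\mathbf a}$), with $S_\emptyset=0$. *)

theory Defs
  imports Main "HOL-Library.Poly_Mapping"
begin

text \<open>Exponent vectors (eventually zero sequences) are finitely supported maps
  nat to nat with finite support; a formal series assigns an integer coefficient to each of them.\<close>

type_synonym expo = "nat \<Rightarrow>\<^sub>0 nat"
type_synonym series = "expo \<Rightarrow> int"

definition finitary :: "nat list set \<Rightarrow> bool" where
  "finitary A \<longleftrightarrow> (\<forall>x\<in>A. x \<noteq> []) \<and>
     (\<forall>n. \<exists>h. \<forall>x\<in>A. set x \<subseteq> {0..n} \<longrightarrow> length x \<le> h)"

definition W :: "nat list set set" where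
  "W = {A. finitary A}"

definition total_deg :: "expo \<Rightarrow> nat" where
  "total_deg a = (\<Sum>i\<in>Poly_Mapping.keys a. Poly_Mapping.lookup a i)"

definition multinom :: "expo \<Rightarrow> nat" where
  "multinom a = fact (total_deg a) div (\<Prod>i\<in>Poly_Mapping.keys a. fact (Poly_Mapping.lookup a i))"

definition R :: "series set" where
  "R = {S. (\<exists>d::nat \<Rightarrow> nat. \<forall>a. (\<exists>n. Poly_Mapping.lookup a n > d n) \<longrightarrow> S a = 0) \<and>
           (\<exists>b::nat. \<forall>a. \<bar>S a\<bar> \<le> int b * int (multinom a))}"

definition Rplus :: "series set" where
  "Rplus = {S \<in> R. S \<noteq> (\<lambda>_. 0) \<and> (\<forall>a. S a \<ge> 0)}"

definition series_mult :: "series \<Rightarrow> series \<Rightarrow> series" where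
  "series_mult S T = (\<lambda>a. \<Sum>(b, c) \<in> {(b, c). b + c = a}. S b * T c)"

definition tm1 :: "nat \<Rightarrow> series" where
  "tm1 n = (\<lambda>a. if a = Poly_Mapping.single n 1 then 1 else if a = 0 then -1 else 0)"

definition I0 :: "series set" where
  "I0 = {S. \<exists>(N::nat) (r :: nat \<Rightarrow> series) (m :: nat \<Rightarrow> nat).
             (\<forall>j<N. r j \<in> R) \<and> S = (\<lambda>a. \<Sum>j<N. series_mult (r j) (tm1 (m j)) a)}"

definition tx :: "nat list \<Rightarrow> expo" where
  "tx x = Abs_poly_mapping (\<lambda>i. count_list x i)"

definition charser :: "nat list set \<Rightarrow> series" where
  "charser X = (\<lambda>a. int (card {x \<in> X. tx x = a}))"

end

theory Submission
  imports Defs "HOL-Combinatorics.Multiset_Permutations" "HOL-Library.FuncSet"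
begin

lemma lookup_tx: "Poly_Mapping.lookup (tx x) = count_list x"
proof -
  have "{i. count_list x i \<noteq> 0} \<subseteq> set x" by (auto simp: count_list_0_iff)
  hence "finite {i. count_list x i \<noteq> 0}" by (rule finite_subset) simp
  thus ?thesis unfolding tx_def by simp
qed

lemma tx_append: "tx (x @ y) = tx x + tx y"
  by (rule poly_mapping_eqI) (simp add: lookup_tx lookup_add)

lemma tx_Nil: "tx [] = 0"
  by (rule poly_mapping_eqI) (simp add: lookup_tx)

definition Mof :: "expo \<Rightarrow> nat multiset" where
  "Mof a = Abs_multiset (Poly_Mapping.lookup a)"

lemma count_Mof: "count (Mof a) = Poly_Mapping.lookup a"
proof -
  have "{x. Poly_Mapping.lookup a x > 0} = Poly_Mapping.keys a" by (auto simp: in_keys_iff)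
  thus ?thesis unfolding Mof_def by (simp add: count_Abs_multiset)
qed

lemma tx_eq_iff: "tx x = a \<longleftrightarrow> mset x = Mof a"
proof
  assume "tx x = a" thus "mset x = Mof a"
    by (intro multiset_eqI) (auto simp: count_Mof count_mset lookup_tx)
next
  assume h: "mset x = Mof a"
  show "tx x = a"
  proof (rule poly_mapping_eqI)
    fix k
    have "count (mset x) k = count (Mof a) k" using h by simp
    thus "Poly_Mapping.lookup (tx x) k = Poly_Mapping.lookup a k"
      by (simp add: count_Mof count_mset lookup_tx)
  qed
qed

definition Lset :: "expo \<Rightarrow> nat list set" where
  "Lset a = {x. tx x = a}"

lemma Lset_perm: "Lset a = permutations_of_multiset (Mof a)"
  by (auto simp: Lset_def permutations_of_multiset_def tx_eq_iff)

lemma finite_Lset: "finite (Lset a)"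
  by (simp add: Lset_perm)

lemma set_mset_Mof: "set_mset (Mof a) = Poly_Mapping.keys a"
  by (auto simp: set_mset_def count_Mof in_keys_iff)

lemma multinom_card: "multinom a = card (Lset a)"
proof -
  have "size (Mof a) = total_deg a"
    by (simp add: size_multiset_overloaded_eq set_mset_Mof count_Mof total_deg_def)
  thus ?thesis
    by (simp add: Lset_perm card_permutations_of_multiset(1) multinom_def set_mset_Mof count_Mof)
qed

lemma ex_tx: "\<exists>y. tx y = c"
  using ex_mset[of "Mof c"] by (auto simp: tx_eq_iff)

lemma card_Lset_mono: "card (Lset b) \<le> card (Lset (b + c))"
proof -
  obtain y where y: "tx y = c" using ex_tx by blast
  have "inj_on (\<lambda>x. x @ y) (Lset b)" by (auto simp: inj_on_def)
  moreover have "(\<lambda>x. x @ y) ` Lset b \<subseteq> Lset (b + c)"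
    by (auto simp: Lset_def tx_append y)
  ultimately show ?thesis using card_inj_on_le finite_Lset by blast
qed

lemma multinom_mono: "multinom b \<le> multinom (b + c)"
  by (simp add: multinom_card card_Lset_mono)

lemma tx_10: "tx [1,0] = tx [0,1]"
  by (rule poly_mapping_eqI) (simp add: lookup_tx)

lemma card_Lset_double: "2 * card (Lset a) \<le> card (Lset (tx [0,1] + a))"
proof -
  let ?f = "\<lambda>x. [0,1::nat] @ x" and ?g = "\<lambda>x. [1,0::nat] @ x"
  have "card (?f ` Lset a) = card (Lset a)" by (rule card_image) (auto simp: inj_on_def)
  moreover have "card (?g ` Lset a) = card (Lset a)" by (rule card_image) (auto simp: inj_on_def)
  moreover have "?f ` Lset a \<inter> ?g ` Lset a = {}" by auto
  moreover have "?f ` Lset a \<union> ?g ` Lset a \<subseteq> Lset (tx [0,1] + a)"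
    using tx_10 by (auto simp: Lset_def tx_append simp del: append_Cons)
  ultimately show ?thesis
    by (metis card_Un_disjoint card_mono finite_Lset finite_imageI mult_2)
qed

lemma card_Lset_pow: "2 ^ k * card (Lset a) \<le> card (Lset (a + tx (concat (replicate k [0,1]))))"
proof (induction k)
  case 0 thus ?case by (simp add: tx_Nil)
next
  case (Suc k)
  have "2 ^ Suc k * card (Lset a) \<le> 2 * card (Lset (a + tx (concat (replicate k [0,1]))))"
    using Suc by simp
  also have "\<dots> \<le> card (Lset (tx [0,1] + (a + tx (concat (replicate k [0,1])))))"
    by (rule card_Lset_double)
  also have "tx [0,1] + (a + tx (concat (replicate k [0,1]))) = a + tx (concat (replicate (Suc k) [0,1]))"
    by (simp add: tx_append[symmetric] add_ac)
  finally show ?case .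
qed

lemma finite_bounded_expo: "finite {b::expo. \<forall>k. Poly_Mapping.lookup b k \<le> Poly_Mapping.lookup a k}"
proof -
  let ?A = "{b::expo. \<forall>k. Poly_Mapping.lookup b k \<le> Poly_Mapping.lookup a k}"
  let ?h = "\<lambda>b::expo. restrict (Poly_Mapping.lookup b) (Poly_Mapping.keys a)"
  have "inj_on ?h ?A"
  proof (rule inj_onI)
    fix b b' assume b: "b \<in> ?A" and b': "b' \<in> ?A" and e: "?h b = ?h b'"
    show "b = b'"
    proof (rule poly_mapping_eqI)
      fix k
      show "Poly_Mapping.lookup b k = Poly_Mapping.lookup b' k"
      proof (cases "k \<in> Poly_Mapping.keys a")
        case True thus ?thesis using fun_cong[OF e, of k] by simp
      next
        case False
        hence "Poly_Mapping.lookup a k = 0" by (simp add: in_keys_iff)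
        moreover have "Poly_Mapping.lookup b k \<le> Poly_Mapping.lookup a k"
          "Poly_Mapping.lookup b' k \<le> Poly_Mapping.lookup a k" using b b' by auto
        ultimately show ?thesis by simp
      qed
    qed
  qed
  moreover have "?h ` ?A \<subseteq> (\<Pi>\<^sub>E k \<in> Poly_Mapping.keys a. {0..Poly_Mapping.lookup a k})"
    by (auto simp: PiE_def Pi_def)
  moreover have "finite (\<Pi>\<^sub>E k \<in> Poly_Mapping.keys a. {0..Poly_Mapping.lookup a k})"
    by (rule finite_PiE) auto
  ultimately have "finite (?h ` ?A)" using finite_subset by blast
  thus ?thesis using \<open>inj_on ?h ?A\<close> finite_imageD by blast
qed

lemma finite_decomp: "finite {(b, c). b + c = (a::expo)}"
proof -
  have "{(b, c). b + c = a} \<subseteq> (\<lambda>b. (b, a - b)) ` {b::expo. \<forall>k. Poly_Mapping.lookup b k \<le> Poly_Mapping.lookup a k}"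
  proof
    fix p assume "p \<in> {(b, c). b + c = a}"
    then obtain b c where p: "p = (b, c)" "b + c = a" by auto
    hence "c = a - b" by (metis add_diff_cancel_left')
    moreover have "\<forall>k. Poly_Mapping.lookup b k \<le> Poly_Mapping.lookup a k"
      using p(2)[symmetric] by (simp add: lookup_add)
    ultimately show "p \<in> (\<lambda>b. (b, a - b)) ` {b. \<forall>k. Poly_Mapping.lookup b k \<le> Poly_Mapping.lookup a k}"
      unfolding p(1) by (intro image_eqI[where x=b]) simp_all
  qed
  thus ?thesis using finite_bounded_expo finite_subset by blast
qed

definition sh :: "expo \<Rightarrow> series \<Rightarrow> series" where
  "sh c P = (\<lambda>a. if \<exists>b. a = b + c then P (a - c) else 0)"

lemma sh_add: "sh (c + e) P = sh e (sh c P)"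
proof
  fix a
  show "sh (c + e) P a = sh e (sh c P) a"
  proof (cases "\<exists>b. a = b + (c + e)")
    case True
    then obtain b where b: "a = b + (c + e)" by blast
    hence a1: "a = (b + c) + e" by (simp add: add.assoc)
    have "a - (c + e) = b" using b by simp
    moreover have "a - e = b + c" using a1 by simp
    moreover have "\<exists>b. a = b + e" using a1 by blast
    moreover have "\<exists>b'. a - e = b' + c" using \<open>a - e = b + c\<close> by blast
    ultimately show ?thesis using True by (simp add: sh_def)
  next
    case False
    hence "\<not> (\<exists>b. a = b + e \<and> (\<exists>b'. a - e = b' + c))"
      by (metis add.assoc add.commute add_diff_cancel_left')
    thus ?thesis using False unfolding sh_def by auto
  qed
qed

lemma series_mult_tm1: "series_mult r (tm1 i) = (\<lambda>a. sh (Poly_Mapping.single i 1) r a - r a)"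
proof
  fix a :: expo
  let ?e = "Poly_Mapping.single i (1::nat)"
  let ?S = "{(b, c). b + c = a}"
  let ?f = "\<lambda>(b, c). r b * tm1 i c"
  let ?T = "{(a, 0::expo)} \<union> (if \<exists>b. a = b + ?e then {(a - ?e, ?e)} else {})"
  have e0: "?e \<noteq> 0" by (metis lookup_single_eq lookup_zero zero_neq_one)
  have "sum ?f ?S = sum ?f ?T"
  proof (rule sum.mono_neutral_right)
    show "finite ?S" by (rule finite_decomp)
    show "?T \<subseteq> ?S" by auto
    show "\<forall>p\<in>?S - ?T. ?f p = 0"
    proof
      fix p assume p: "p \<in> ?S - ?T"
      then obtain b c where bc: "p = (b, c)" "b + c = a" by auto
      have "c \<noteq> 0" using p bc by auto
      moreover have "c \<noteq> ?e" using p bc by auto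
      ultimately show "?f p = 0" using bc by (simp add: tm1_def)
    qed
  qed
  also have "\<dots> = sh ?e r a - r a"
  proof (cases "\<exists>b. a = b + ?e")
    case True
    have "(a - ?e, ?e) \<noteq> (a, 0)" using e0 by auto
    thus ?thesis using True e0 by (simp add: sh_def tm1_def)
  next
    case False thus ?thesis using e0 by (simp add: sh_def tm1_def)
  qed
  finally show "series_mult r (tm1 i) a = sh ?e r a - r a" by (simp add: series_mult_def)
qed


lemma R_neg: "S \<in> R \<Longrightarrow> (\<lambda>a. - S a) \<in> R"
  unfolding R_def mem_Collect_eq by auto

lemma R_max: "S \<in> R \<Longrightarrow> (\<lambda>a. max (S a) 0) \<in> R"
proof -
  assume "S \<in> R"
  then obtain d B where d: "\<forall>a. (\<exists>n. Poly_Mapping.lookup a n > d n) \<longrightarrow> S a = 0"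
    and B: "\<forall>a. \<bar>S a\<bar> \<le> int B * int (multinom a)" unfolding R_def mem_Collect_eq by blast
  have "\<forall>a. (\<exists>n. Poly_Mapping.lookup a n > d n) \<longrightarrow> max (S a) 0 = 0" using d by auto
  moreover have "\<forall>a. \<bar>max (S a) 0\<bar> \<le> int B * int (multinom a)"
  proof
    fix a show "\<bar>max (S a) 0\<bar> \<le> int B * int (multinom a)" using B[rule_format, of a] by auto
  qed
  ultimately show ?thesis unfolding R_def mem_Collect_eq by blast
qed

lemma R_sh: "P \<in> R \<Longrightarrow> sh c P \<in> R"
proof -
  assume "P \<in> R"
  then obtain d B where d: "\<forall>a. (\<exists>n. Poly_Mapping.lookup a n > d n) \<longrightarrow> P a = 0"
    and B: "\<forall>a. \<bar>P a\<bar> \<le> int B * int (multinom a)" unfolding R_def mem_Collect_eq by blast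
  let ?d = "\<lambda>n. d n + Poly_Mapping.lookup c n"
  have h1: "\<forall>a. (\<exists>n. Poly_Mapping.lookup a n > ?d n) \<longrightarrow> sh c P a = 0"
  proof (intro allI impI)
    fix a assume "\<exists>n. Poly_Mapping.lookup a n > ?d n"
    then obtain n where n: "Poly_Mapping.lookup a n > ?d n" by blast
    show "sh c P a = 0"
    proof (cases "\<exists>b. a = b + c")
      case True
      then obtain b where b: "a = b + c" by blast
      hence "Poly_Mapping.lookup b n > d n" using n by (simp add: lookup_add)
      hence "P b = 0" using d by blast
      thus ?thesis using b by (simp add: sh_def)
    next
      case False thus ?thesis by (simp add: sh_def)
    qed
  qed
  have h2: "\<forall>a. \<bar>sh c P a\<bar> \<le> int B * int (multinom a)"
  proof
    fix a
    show "\<bar>sh c P a\<bar> \<le> int B * int (multinom a)"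
    proof (cases "\<exists>b. a = b + c")
      case True
      then obtain b where b: "a = b + c" by blast
      have "\<bar>P b\<bar> \<le> int B * int (multinom b)" using B by blast
      also have "\<dots> \<le> int B * int (multinom a)"
        using multinom_mono[of b c] b by (simp add: mult_left_mono)
      finally show ?thesis using b by (simp add: sh_def)
    next
      case False thus ?thesis by (simp add: sh_def)
    qed
  qed
  show ?thesis unfolding R_def mem_Collect_eq
    by (intro conjI exI[where x="?d"] exI[where x=B]) (rule h1, rule h2)
qed

lemma I0_zero: "(\<lambda>a. 0) \<in> I0"
  unfolding I0_def mem_Collect_eq by (rule exI[where x=0]) simp

lemma I0_single: "r \<in> R \<Longrightarrow> series_mult r (tm1 i) \<in> I0"
  unfolding I0_def mem_Collect_eq
  by (rule exI[where x=1], rule exI[where x="\<lambda>_. r"], rule exI[where x="\<lambda>_. i"]) simp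

lemma series_mult_neg: "series_mult (\<lambda>a. - r a) t = (\<lambda>a. - series_mult r t a)"
  unfolding series_mult_def by (simp add: case_prod_beta sum_negf)

lemma I0_uminus: "S \<in> I0 \<Longrightarrow> (\<lambda>a. - S a) \<in> I0"
proof -
  assume "S \<in> I0"
  then obtain N :: nat and r m where r: "\<forall>j<N. r j \<in> R" and S: "S = (\<lambda>a. \<Sum>j<N. series_mult (r j) (tm1 (m j)) a)"
    unfolding I0_def mem_Collect_eq by blast
  let ?r = "\<lambda>j a. - r j a"
  have "\<forall>j<N. ?r j \<in> R" using r R_neg by blast
  moreover have "(\<lambda>a. - S a) = (\<lambda>a. \<Sum>j<N. series_mult (?r j) (tm1 (m j)) a)"
    using S by (simp add: series_mult_neg sum_negf)
  ultimately show ?thesis unfolding I0_def mem_Collect_eq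
    by (intro exI[where x=N] exI[where x="?r"] exI[where x=m] conjI)
qed

lemma sum_lessThan_add_split:
  "(\<Sum>j<N1 + N2. f j) = (\<Sum>j<N1. f j) + (\<Sum>j<N2. f (N1 + (j::nat)))"
  by (induction N2) (simp_all add: add_ac)

lemma I0_add: "S \<in> I0 \<Longrightarrow> T \<in> I0 \<Longrightarrow> (\<lambda>a. S a + T a) \<in> I0"
proof -
  assume "S \<in> I0" "T \<in> I0"
  then obtain N1 N2 :: nat and r1 m1 r2 m2 where r1: "\<forall>j<N1. r1 j \<in> R"
    and S: "S = (\<lambda>a. \<Sum>j<N1. series_mult (r1 j) (tm1 (m1 j)) a)"
    and r2: "\<forall>j<N2. r2 j \<in> R"
    and T: "T = (\<lambda>a. \<Sum>j<N2. series_mult (r2 j) (tm1 (m2 j)) a)"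
    unfolding I0_def mem_Collect_eq by blast
  let ?r = "\<lambda>j. if j < N1 then r1 j else r2 (j - N1)"
  let ?m = "\<lambda>j. if j < N1 then m1 j else m2 (j - N1)"
  have "\<forall>j<N1 + N2. ?r j \<in> R" using r1 r2 by auto
  moreover have "(\<lambda>a. S a + T a) = (\<lambda>a. \<Sum>j<N1 + N2. series_mult (?r j) (tm1 (?m j)) a)"
    unfolding S T sum_lessThan_add_split by simp
  ultimately show ?thesis unfolding I0_def mem_Collect_eq
    by (intro exI[where x="N1 + N2"] exI[where x="?r"] exI[where x="?m"] conjI)
qed

lemma sh_zero: "sh 0 P = P"
  by (simp add: sh_def fun_eq_iff)

lemma tx_single: "tx [i] = Poly_Mapping.single i 1"
  by (rule poly_mapping_eqI) (simp add: lookup_tx lookup_single when_def)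

lemma I0_sh: "P \<in> R \<Longrightarrow> (\<lambda>a. P a - sh (tx xs) P a) \<in> I0"
proof (induction xs rule: rev_induct)
  case Nil thus ?case using I0_zero by (simp add: tx_Nil sh_zero)
next
  case (snoc i xs)
  let ?Q = "sh (tx xs) P"
  let ?e = "Poly_Mapping.single i (1::nat)"
  have Q: "?Q \<in> R" using snoc.prems R_sh by blast
  have "(\<lambda>a. - series_mult ?Q (tm1 i) a) \<in> I0" using I0_uminus I0_single Q by blast
  hence "(\<lambda>a. ?Q a - sh ?e ?Q a) \<in> I0" by (simp add: series_mult_tm1)
  hence "(\<lambda>a. (P a - ?Q a) + (?Q a - sh ?e ?Q a)) \<in> I0" using I0_add snoc by blast
  moreover have "sh (tx (xs @ [i])) P = sh ?e ?Q" by (simp add: tx_append tx_single sh_add)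
  ultimately show ?case by simp
qed


lemma main_pos:
  assumes PR: "P \<in> R" and Pnn: "\<forall>a. P a \<ge> 0"
  shows "\<exists>X\<in>W. (\<lambda>a. P a - charser X a) \<in> I0"
proof -
  obtain d B where d: "\<forall>a. (\<exists>n. Poly_Mapping.lookup a n > d n) \<longrightarrow> P a = 0"
    and B: "\<forall>a. \<bar>P a\<bar> \<le> int B * int (multinom a)"
    using PR unfolding R_def mem_Collect_eq by blast
  define k where "k = Suc B"
  define cs where "cs = concat (replicate k [0::nat,1])"
  define c where "c = tx cs"
  define Q where "Q = sh c P"
  have Bk: "B \<le> 2 ^ k"
    using less_exp[of B] power_increasing[of B k "2::nat"] unfolding k_def by linarith
  have Qnn: "Q a \<ge> 0" for a using Pnn by (simp add: Q_def sh_def)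
  have Qle: "nat (Q a) \<le> card (Lset a)" for a
  proof (cases "\<exists>b. a = b + c")
    case True
    then obtain b where b: "a = b + c" by blast
    have "Q a = P b" using b by (simp add: Q_def sh_def)
    also have "\<dots> \<le> int B * int (card (Lset b))" using B[rule_format, of b] by (simp add: multinom_card)
    also have "\<dots> \<le> int (2 ^ k * card (Lset b))" using Bk by (simp add: mult_right_mono)
    also have "\<dots> \<le> int (card (Lset a))"
    proof -
      have "2 ^ k * card (Lset b) \<le> card (Lset a)" using card_Lset_pow[of k b] b by (simp add: c_def cs_def)
      thus ?thesis by (simp only: of_nat_le_iff)
    qed
    finally show ?thesis by simp
  next
    case False thus ?thesis by (simp add: Q_def sh_def)
  qed
  define ch where "ch a = (SOME Y. Y \<subseteq> Lset a \<and> card Y = nat (Q a))" for a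
  have ch: "ch a \<subseteq> Lset a \<and> card (ch a) = nat (Q a)" for a
  proof -
    obtain Y where "Y \<subseteq> Lset a" "card Y = nat (Q a)"
      using obtain_subset_with_card_n[OF Qle[of a]] by metis
    hence "\<exists>Y. Y \<subseteq> Lset a \<and> card Y = nat (Q a)" by blast
    thus ?thesis unfolding ch_def by (rule someI_ex)
  qed
  define X where "X = (\<Union>a. ch a)"
  have chX: "{x \<in> X. tx x = a} = ch a" for a
  proof
    show "{x \<in> X. tx x = a} \<subseteq> ch a"
    proof
      fix x assume "x \<in> {x \<in> X. tx x = a}"
      then obtain a' where "x \<in> ch a'" "tx x = a" unfolding X_def by blast
      moreover have "tx x = a'" using \<open>x \<in> ch a'\<close> ch[of a'] by (auto simp: Lset_def)
      ultimately show "x \<in> ch a" by simp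
    qed
    show "ch a \<subseteq> {x \<in> X. tx x = a}" using ch[of a] by (auto simp: X_def Lset_def)
  qed
  have charX: "charser X = Q"
  proof
    fix a show "charser X a = Q a" using chX[of a] ch[of a] Qnn[of a] by (simp add: charser_def)
  qed
  have memX: "\<exists>b. tx x = b + c \<and> P b \<noteq> 0" if xX0: "x \<in> X" for x
  proof -
    obtain a where xa: "x \<in> ch a" using xX0 unfolding X_def by blast
    have "finite (ch a)" using ch[of a] finite_Lset finite_subset by blast
    hence "card (ch a) > 0" using xa card_gt_0_iff by blast
    hence Qa: "Q a \<noteq> 0" using ch[of a] by simp
    have txa: "tx x = a" using xa ch[of a] by (auto simp: Lset_def)
    show ?thesis
    proof (cases "\<exists>b. a = b + c")
      case True
      then obtain b where b: "a = b + c" by blast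
      have "P b \<noteq> 0" using Qa b by (simp add: Q_def sh_def)
      thus ?thesis using b txa by blast
    next
      case False thus ?thesis using Qa by (simp add: Q_def sh_def)
    qed
  qed
  have c0: "Poly_Mapping.lookup c 0 \<noteq> 0"
    unfolding c_def cs_def k_def by (simp add: lookup_tx count_list_0_iff)
  have "finitary X"
    unfolding finitary_def
  proof (intro conjI ballI allI)
    fix x assume "x \<in> X"
    then obtain b where b: "tx x = b + c" using memX by blast
    show "x \<noteq> []"
    proof
      assume "x = []"
      hence "b + c = 0" using b by (simp add: tx_Nil)
      hence "Poly_Mapping.lookup (b + c) 0 = 0" by simp
      thus False using c0 by (simp add: lookup_add)
    qed
  next
    fix n
    show "\<exists>h. \<forall>x\<in>X. set x \<subseteq> {0..n} \<longrightarrow> length x \<le> h"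
    proof (intro exI ballI impI)
      fix x assume xX: "x \<in> X" and sx: "set x \<subseteq> {0..n}"
      obtain b where b: "tx x = b + c" and Pb: "P b \<noteq> 0" using memX xX by blast
      have "length x = (\<Sum>i\<in>{0..n}. count_list x i)" using sum_count_set[OF sx] by simp
      also have "\<dots> = (\<Sum>i\<in>{0..n}. Poly_Mapping.lookup b i + Poly_Mapping.lookup c i)"
        by (rule sum.cong) (simp_all add: lookup_tx[symmetric] b lookup_add)
      also have "\<dots> \<le> (\<Sum>i\<in>{0..n}. d i + Poly_Mapping.lookup c i)"
      proof (rule sum_mono)
        fix i
        have "\<not> Poly_Mapping.lookup b i > d i" using d Pb by blast
        thus "Poly_Mapping.lookup b i + Poly_Mapping.lookup c i \<le> d i + Poly_Mapping.lookup c i" by simp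
      qed
      finally show "length x \<le> (\<Sum>i\<in>{0..n}. d i + Poly_Mapping.lookup c i)" .
    qed
  qed
  hence "X \<in> W" by (simp add: W_def)
  moreover have "(\<lambda>a. P a - charser X a) \<in> I0"
    using I0_sh[OF PR, of cs] by (simp add: charX Q_def c_def)
  ultimately show ?thesis by blast
qed

theorem lemma1p11:
  shows "(\<forall>P \<in> Rplus. \<exists>X \<in> W. (\<lambda>a. P a - charser X a) \<in> I0) \<and>
         (\<forall>S \<in> R. \<exists>X \<in> W. \<exists>Y \<in> W. \<exists>S0 \<in> I0.
              S = (\<lambda>a. charser X a - charser Y a + S0 a))"
proof (intro conjI ballI)
  fix P assume "P \<in> Rplus"
  thus "\<exists>X \<in> W. (\<lambda>a. P a - charser X a) \<in> I0" using main_pos by (simp add: Rplus_def)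
next
  fix S assume S: "S \<in> R"
  let ?Sp = "\<lambda>a. max (S a) 0" and ?Sm = "\<lambda>a. max (- S a) 0"
  have "?Sp \<in> R" using R_max S by blast
  then obtain X where X: "X \<in> W" "(\<lambda>a. ?Sp a - charser X a) \<in> I0" using main_pos by force
  have "?Sm \<in> R" using R_max R_neg S by blast
  then obtain Y where Y: "Y \<in> W" "(\<lambda>a. ?Sm a - charser Y a) \<in> I0" using main_pos by force
  let ?S0 = "\<lambda>a. (?Sp a - charser X a) + - (?Sm a - charser Y a)"
  have "?S0 \<in> I0" using I0_add[OF X(2) I0_uminus[OF Y(2)]] by simp
  moreover have "S = (\<lambda>a. charser X a - charser Y a + ?S0 a)" by (auto simp: fun_eq_iff)
  ultimately show "\<exists>X \<in> W. \<exists>Y \<in> W. \<exists>S0 \<in> I0. S = (\<lambda>a. charser X a - charser Y a + S0 a)"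
    by (intro bexI[OF _ X(1)] bexI[OF _ Y(1)] bexI[where x="?S0"])
qed

end
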